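(* If $G$ is a $k$-gate, then $G\in$ Helly $[k,2,2]$. Furthermore, $G$ admits a Helly $(k,2,2)$-representation on a host tree that is a star.
   Context: All graphs are finite and simple. An $EPT$ representation of a graph $G$ is a pair $\langle \mathcal{P},T\rangle$ where $T$ is a tree and $\mathcal{P}=(P_v)_{v\in V(G)}$ is a family of subpaths of $T$ such that two distinct vertices $v,w$ are adjacent if and only if $E(P_v)\cap E(P_w)\neq\emptyset$. If $T$ has maximum degree $h$ this is an $(h,2,2)$-representation. It is Helly if $(E(P))_{P\in\mathcal{P}}$ has the Helly property (every pairwise intersecting subfamily has nonempty total intersection); Helly $[h,2,2]$ is the class of graphs admitting a Helly $(h,2,2)$-representation. A clique is a maximal complete set. Gates are defined recursively: (i) every chordless cycle $C_n$ with $n\geq 4$ is a gate; (ii) if $H$ is a gate, $C$ and $C'$ are disjoint cliques of $H$, and $P=(v_1,\dots,v_l)$ with $l\geq 2$ is a chordless path vertex-disjoint from $H$, then the union of $H$ and $P$ together with all edges between $v_1$ and the vertices of $C$ and all edges between $v_l$ and the vertices of $C'$ is a gate; (iii) there are no other gates. A $k$-gate is a gate with exactly $k$ cliques. A star is a graph $K_{1,n}$. *)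

theory Defs
  imports Main
begin

type_synonym 'a graph = "'a set \<times> 'a set set"

definition verts :: "'a graph \<Rightarrow> 'a set" where "verts G = fst G"
definition edges :: "'a graph \<Rightarrow> 'a set set" where "edges G = snd G"

definition adj :: "'a graph \<Rightarrow> 'a \<Rightarrow> 'a \<Rightarrow> bool" where
  "adj G u v \<longleftrightarrow> {u, v} \<in> edges G"

definition wf_graph :: "'a graph \<Rightarrow> bool" where
  "wf_graph G \<longleftrightarrow> finite (verts G) \<and>
     edges G \<subseteq> {{u, v} | u v. u \<in> verts G \<and> v \<in> verts G \<and> u \<noteq> v}"

definition complete_set :: "'a graph \<Rightarrow> 'a set \<Rightarrow> bool" where
  "complete_set G C \<longleftrightarrow> C \<subseteq> verts G \<and> (\<forall>u\<in>C. \<forall>v\<in>C. u \<noteq> v \<longrightarrow> adj G u v)"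

definition clique :: "'a graph \<Rightarrow> 'a set \<Rightarrow> bool" where
  "clique G C \<longleftrightarrow> complete_set G C \<and> (\<forall>D. complete_set G D \<and> C \<subseteq> D \<longrightarrow> D = C)"

definition path_edges :: "'a list \<Rightarrow> 'a set set" where
  "path_edges xs = {{xs ! i, xs ! Suc i} | i. Suc i < length xs}"

definition cycle_edges :: "'a list \<Rightarrow> 'a set set" where
  "cycle_edges xs = {{xs ! i, xs ! ((Suc i) mod length xs)} | i. i < length xs}"

inductive gate :: "'a graph \<Rightarrow> bool" where
  gate_cycle: "distinct vs \<Longrightarrow> length vs \<ge> 4 \<Longrightarrow> gate (set vs, cycle_edges vs)"
| gate_ext: "gate H \<Longrightarrow> clique H C \<Longrightarrow> clique H C' \<Longrightarrow> C \<inter> C' = {} \<Longrightarrow>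
     distinct ps \<Longrightarrow> length ps \<ge> 2 \<Longrightarrow> set ps \<inter> verts H = {} \<Longrightarrow>
     gate (verts H \<union> set ps,
           edges H \<union> path_edges ps \<union> {{hd ps, c} | c. c \<in> C} \<union> {{last ps, c} | c. c \<in> C'})"

definition connected_graph :: "'a graph \<Rightarrow> bool" where
  "connected_graph G \<longleftrightarrow> (\<forall>u\<in>verts G. \<forall>v\<in>verts G. (adj G)\<^sup>*\<^sup>* u v)"

definition has_cycle :: "'a graph \<Rightarrow> bool" where
  "has_cycle G \<longleftrightarrow> (\<exists>cs. distinct cs \<and> length cs \<ge> 3 \<and> set cs \<subseteq> verts G \<and>
      (\<forall>i. Suc i < length cs \<longrightarrow> adj G (cs ! i) (cs ! Suc i)) \<and> adj G (last cs) (hd cs))"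

definition is_tree :: "'a graph \<Rightarrow> bool" where
  "is_tree T \<longleftrightarrow> wf_graph T \<and> verts T \<noteq> {} \<and> connected_graph T \<and> \<not> has_cycle T"

definition degree :: "'a graph \<Rightarrow> 'a \<Rightarrow> nat" where
  "degree G v = card {u. adj G u v}"

definition max_degree :: "'a graph \<Rightarrow> nat" where
  "max_degree G = Max (degree G ` verts G)"

definition is_star :: "'a graph \<Rightarrow> bool" where
  "is_star T \<longleftrightarrow> wf_graph T \<and> card (verts T) \<ge> 2 \<and>
     (\<exists>c\<in>verts T. edges T = {{c, x} | x. x \<in> verts T \<and> x \<noteq> c})"

definition is_subpath :: "'b graph \<Rightarrow> 'b list \<Rightarrow> bool" where
  "is_subpath T xs \<longleftrightarrow> distinct xs \<and> length xs \<ge> 2 \<and> set xs \<subseteq> verts T \<and>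
     (\<forall>i. Suc i < length xs \<longrightarrow> adj T (xs ! i) (xs ! Suc i))"

definition ept_rep :: "'a graph \<Rightarrow> 'b graph \<Rightarrow> ('a \<Rightarrow> 'b list) \<Rightarrow> bool" where
  "ept_rep G T P \<longleftrightarrow> is_tree T \<and> (\<forall>v\<in>verts G. is_subpath T (P v)) \<and>
     (\<forall>v\<in>verts G. \<forall>w\<in>verts G. v \<noteq> w \<longrightarrow>
        (adj G v w \<longleftrightarrow> path_edges (P v) \<inter> path_edges (P w) \<noteq> {}))"

definition helly_ept_rep :: "'a graph \<Rightarrow> 'b graph \<Rightarrow> ('a \<Rightarrow> 'b list) \<Rightarrow> bool" where
  "helly_ept_rep G T P \<longleftrightarrow> ept_rep G T P \<and>
     (\<forall>S. S \<subseteq> verts G \<and> S \<noteq> {} \<and>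
          (\<forall>v\<in>S. \<forall>w\<in>S. path_edges (P v) \<inter> path_edges (P w) \<noteq> {})
          \<longrightarrow> (\<Inter>v\<in>S. path_edges (P v)) \<noteq> {})"

definition helly_h22_rep :: "nat \<Rightarrow> 'a graph \<Rightarrow> 'b graph \<Rightarrow> ('a \<Rightarrow> 'b list) \<Rightarrow> bool" where
  "helly_h22_rep h G T P \<longleftrightarrow> helly_ept_rep G T P \<and> max_degree T = h"

text \<open>Helly [h,2,2]; host trees are taken with vertices in nat (every finite tree is isomorphic to one).\<close>
definition helly_h22 :: "nat \<Rightarrow> 'a graph \<Rightarrow> bool" where
  "helly_h22 h G \<longleftrightarrow> (\<exists>(T::nat graph) P. helly_h22_rep h G T P)"

definition num_cliques :: "'a graph \<Rightarrow> nat" where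
  "num_cliques G = card {C. clique G C}"

end

theory Submission
  imports Defs
begin


definition nsplit :: "'a graph \<Rightarrow> 'a \<Rightarrow> 'a set \<Rightarrow> 'a set \<Rightarrow> bool" where
"nsplit G x X1 X2 \<longleftrightarrow> X1 \<noteq> {} \<and> X2 \<noteq> {} \<and> X1 \<inter> X2 = {} \<and>
   complete_set G (insert x X1) \<and> complete_set G (insert x X2) \<and>
   (\<forall>y\<in>X1. \<forall>z\<in>X2. \<not> adj G y z) \<and> (\<forall>y. adj G x y \<longleftrightarrow> y \<in> X1 \<union> X2)"

definition good :: "'a graph \<Rightarrow> bool" where
"good G \<longleftrightarrow> wf_graph G \<and> verts G \<noteq> {} \<and> (\<forall>x\<in>verts G. \<exists>X1 X2. nsplit G x X1 X2)"

lemma nsplitD: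
  assumes "nsplit G x X1 X2"
  shows "X1 \<noteq> {}" "X2 \<noteq> {}" "X1 \<inter> X2 = {}" "complete_set G (insert x X1)"
    "complete_set G (insert x X2)" "\<And>y z. y \<in> X1 \<Longrightarrow> z \<in> X2 \<Longrightarrow> \<not> adj G y z"
    "\<And>y. adj G x y \<longleftrightarrow> y \<in> X1 \<union> X2"
  using assms unfolding nsplit_def by simp_all

lemma nsplitI:
  assumes "X1 \<noteq> {}" "X2 \<noteq> {}" "X1 \<inter> X2 = {}" "complete_set G (insert x X1)"
    "complete_set G (insert x X2)" "\<And>y z. y \<in> X1 \<Longrightarrow> z \<in> X2 \<Longrightarrow> \<not> adj G y z"
    "\<And>y. adj G x y \<longleftrightarrow> y \<in> X1 \<union> X2"
  shows "nsplit G x X1 X2"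
  using assms unfolding nsplit_def by simp

lemma completeD:
  assumes "complete_set G S"
  shows "S \<subseteq> verts G" "\<And>u v. u \<in> S \<Longrightarrow> v \<in> S \<Longrightarrow> u \<noteq> v \<Longrightarrow> adj G u v"
  using assms unfolding complete_set_def by simp_all

lemma completeI:
  assumes "S \<subseteq> verts G" "\<And>u v. u \<in> S \<Longrightarrow> v \<in> S \<Longrightarrow> u \<noteq> v \<Longrightarrow> adj G u v"
  shows "complete_set G S"
  using assms unfolding complete_set_def by simp

lemma cliqueD:
  assumes "clique G C"
  shows "complete_set G C" "\<And>D. complete_set G D \<Longrightarrow> C \<subseteq> D \<Longrightarrow> D = C"
  using assms unfolding clique_def by simp_all

lemma cliqueI:
  assumes "complete_set G C" "\<And>D. complete_set G D \<Longrightarrow> C \<subseteq> D \<Longrightarrow> D = C"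
  shows "clique G C"
  using assms unfolding clique_def by simp

lemma adj_sym: "adj G u v = adj G v u"
  by (simp add: adj_def insert_commute)

lemma wf_adj: "wf_graph G \<Longrightarrow> adj G u v \<Longrightarrow> u \<in> verts G \<and> v \<in> verts G \<and> u \<noteq> v"
  unfolding wf_graph_def adj_def by (auto simp: doubleton_eq_iff)

lemma nsplit_sym1: "nsplit G x X1 X2 \<Longrightarrow> nsplit G x X2 X1"
proof -
  assume a: "nsplit G x X1 X2"
  note d = nsplitD[OF a]
  show ?thesis
  proof (rule nsplitI)
    show "\<not> adj G y z" if "y \<in> X2" "z \<in> X1" for y z
      using d(6)[OF that(2,1)] adj_sym[of G y z] by simp
    show "adj G x y \<longleftrightarrow> y \<in> X2 \<union> X1" for y using d(7)[of y] by blast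
  qed (use d in blast)+
qed

lemma nsplit_sym: "nsplit G x X1 X2 = nsplit G x X2 X1"
  by (rule iffI; erule nsplit_sym1)

lemma nsplit_notin: "wf_graph G \<Longrightarrow> nsplit G x X1 X2 \<Longrightarrow> x \<notin> X1 \<and> x \<notin> X2"
proof -
  assume wf: "wf_graph G" and ns: "nsplit G x X1 X2"
  have "\<not> adj G x x" using wf_adj[OF wf, of x x] by blast
  then show ?thesis using nsplitD(7)[OF ns, of x] by blast
qed

lemma clique_cases:
  assumes wf: "wf_graph G" and ns: "nsplit G x X1 X2" and cl: "clique G D" and xD: "x \<in> D"
  shows "D = insert x X1 \<or> D = insert x X2"
proof -
  note d = nsplitD[OF ns]
  have cD: "complete_set G D" using cliqueD(1)[OF cl] .
  have nb: "y \<in> X1 \<union> X2" if "y \<in> D" "y \<noteq> x" for y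
    using completeD(2)[OF cD xD that(1)] that(2) d(7) by blast
  show ?thesis
  proof (cases "D \<subseteq> insert x X1")
    case True
    then show ?thesis using cliqueD(2)[OF cl d(4)] by blast
  next
    case False
    then obtain z where z: "z \<in> D" "z \<notin> insert x X1" by blast
    with nb have zX2: "z \<in> X2" by blast
    have "D \<subseteq> insert x X2"
    proof
      fix y assume yD: "y \<in> D"
      show "y \<in> insert x X2"
      proof (cases "y = x \<or> y = z")
        case True then show ?thesis using zX2 by blast
      next
        case False
        then have "adj G y z" using completeD(2)[OF cD yD z(1)] by blast
        moreover have "y \<in> X1 \<union> X2" using nb yD False by blast
        ultimately show ?thesis using d(6) zX2 by blast
      qed
    qed
    then show ?thesis using cliqueD(2)[OF cl d(5)] by blast
  qed
qed

lemma clique_side: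
  assumes wf: "wf_graph G" and ns: "nsplit G x X1 X2"
  shows "clique G (insert x X1)"
proof (rule cliqueI)
  note d = nsplitD[OF ns]
  show "complete_set G (insert x X1)" using d(4) .
  fix D assume a: "complete_set G D" "insert x X1 \<subseteq> D"
  obtain w where w: "w \<in> X1" using d(1) by blast
  have "D \<subseteq> insert x X1"
  proof
    fix y assume yD: "y \<in> D"
    show "y \<in> insert x X1"
    proof (cases "y = x")
      case True then show ?thesis by blast
    next
      case False
      then have "adj G x y" using completeD(2)[OF a(1) _ yD] a(2) by blast
      then have "y \<in> X1 \<union> X2" using d(7) by blast
      moreover have "y \<in> X2 \<Longrightarrow> False"
      proof -
        assume y2: "y \<in> X2"
        then have "w \<noteq> y" using w d(3) by blast
        then have "adj G w y" using completeD(2)[OF a(1) _ yD] a(2) w by blast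
        then show False using w y2 d(6) by blast
      qed
      ultimately show ?thesis by blast
    qed
  qed
  then show "D = insert x X1" using a by blast
qed



lemma complete_pair: "u \<in> verts G \<Longrightarrow> v \<in> verts G \<Longrightarrow> adj G u v \<Longrightarrow> complete_set G {u, v}"
  by (rule completeI) (use adj_sym[of G u v] in auto)

lemma good_cycle:
  assumes dist: "distinct vs" and len: "length vs \<ge> 4"
  shows "good (set vs, cycle_edges vs)"
proof -
  define n where "n = length vs"
  define G where "G = (set vs, cycle_edges vs)"
  define sc where "sc i = (if Suc i = n then 0 else Suc i)" for i
  define pr where "pr i = (if i = 0 then n - 1 else i - 1)" for i
  have n4: "n \<ge> 4" using len n_def by simp
  have scm: "Suc i mod n = sc i" if "i < n" for i
    using that unfolding sc_def by (simp add: mod_Suc)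
  have sclt: "sc i < n" if "i < n" for i using that n4 unfolding sc_def by auto
  have prlt: "pr i < n" if "i < n" for i using that n4 unfolding pr_def by auto
  have vG: "verts G = set vs" and eG: "edges G = cycle_edges vs"
    by (simp_all add: G_def verts_def edges_def)
  have ceq: "cycle_edges vs = {{vs ! i, vs ! sc i} | i. i < n}"
    unfolding cycle_edges_def n_def[symmetric] using scm by force
  have nthinj: "vs ! a = vs ! b \<longleftrightarrow> a = b" if "a < n" "b < n" for a b
    using dist that n_def nth_eq_iff_index_eq by blast
  have adjidx: "adj G (vs ! a) (vs ! b) \<longleftrightarrow> (b = sc a \<or> a = sc b)" if ab: "a < n" "b < n" for a b
  proof -
    have "adj G (vs ! a) (vs ! b) \<longleftrightarrow> (\<exists>i<n. {vs ! a, vs ! b} = {vs ! i, vs ! sc i})"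
      unfolding adj_def eG ceq by blast
    also have "\<dots> \<longleftrightarrow> (\<exists>i<n. (a = i \<and> b = sc i) \<or> (a = sc i \<and> b = i))"
      using ab sclt nthinj by (auto simp: doubleton_eq_iff)
    also have "\<dots> \<longleftrightarrow> (b = sc a \<or> a = sc b)" using ab by auto
    finally show ?thesis .
  qed
  have wf: "wf_graph G"
    unfolding wf_graph_def vG eG ceq
  proof (intro conjI)
    show "finite (set vs)" by simp
    show "{{vs ! i, vs ! sc i} |i. i < n} \<subseteq> {{u, v} |u v. u \<in> set vs \<and> v \<in> set vs \<and> u \<noteq> v}"
    proof
      fix e assume "e \<in> {{vs ! i, vs ! sc i} |i. i < n}"
      then obtain i where i: "i < n" "e = {vs ! i, vs ! sc i}" by blast
      have "i \<noteq> sc i" using n4 unfolding sc_def by auto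
      then have "vs ! i \<noteq> vs ! sc i" using nthinj i sclt by blast
      then show "e \<in> {{u, v} |u v. u \<in> set vs \<and> v \<in> set vs \<and> u \<noteq> v}"
        using i sclt n_def by (auto intro!: nth_mem)
    qed
  qed
  have "\<exists>X1 X2. nsplit G x X1 X2" if xG: "x \<in> verts G" for x
  proof -
    obtain j where j: "j < n" "x = vs ! j" using xG vG n_def by (auto simp: in_set_conv_nth)
    have d1: "pr j \<noteq> sc j" using j n4 unfolding pr_def sc_def by auto
    have a1: "adj G (vs ! j) (vs ! pr j)" using adjidx j prlt n4 unfolding pr_def sc_def by auto
    have a2: "adj G (vs ! j) (vs ! sc j)" using adjidx j sclt by auto
    have na: "\<not> adj G (vs ! pr j) (vs ! sc j)"
      using adjidx j prlt sclt n4 unfolding pr_def sc_def by auto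
    have mem: "vs ! i \<in> verts G" if "i < n" for i using that vG n_def by simp
    have nb: "adj G x y \<longleftrightarrow> y \<in> {vs ! pr j} \<union> {vs ! sc j}" for y
    proof
      assume "adj G x y"
      then have "y \<in> set vs" using wf_adj[OF wf \<open>adj G x y\<close>] vG by blast
      then obtain b where b: "b < n" "y = vs ! b" using n_def by (auto simp: in_set_conv_nth)
      have "b = sc j \<or> j = sc b" using adjidx j b \<open>adj G x y\<close> by blast
      then have "b = sc j \<or> b = pr j" using b j n4 unfolding sc_def pr_def by (auto split: if_splits)
      then show "y \<in> {vs ! pr j} \<union> {vs ! sc j}" using b by auto
    next
      assume "y \<in> {vs ! pr j} \<union> {vs ! sc j}"
      then show "adj G x y" using a1 a2 j by auto
    qed
    show ?thesis
    proof (intro exI nsplitI)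
      show "{vs ! pr j} \<inter> {vs ! sc j} = {}" using d1 nthinj prlt sclt j by auto
      show "complete_set G (insert x {vs ! pr j})"
        using complete_pair[OF _ _ a1] mem j prlt by auto
      show "complete_set G (insert x {vs ! sc j})"
        using complete_pair[OF _ _ a2] mem j sclt by auto
      show "\<not> adj G y z" if "y \<in> {vs ! pr j}" "z \<in> {vs ! sc j}" for y z
        using na that by simp
    qed (use nb in auto)
  qed
  then show ?thesis unfolding good_def G_def[symmetric] using wf vG n4 n_def by auto
qed



lemma mono_complete:
  assumes "complete_set H S" "verts H \<subseteq> verts G" "edges H \<subseteq> edges G"
  shows "complete_set G S"
  using assms unfolding complete_set_def adj_def by blast

lemma pair_in_star: "{u, v} \<in> {{a, c} | c. c \<in> S} \<longleftrightarrow> (u = a \<and> v \<in> S) \<or> (v = a \<and> u \<in> S)"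
  by (auto simp: doubleton_eq_iff)

lemma goodD: assumes "good G" shows "wf_graph G" "verts G \<noteq> {}" "\<And>x. x \<in> verts G \<Longrightarrow> \<exists>X1 X2. nsplit G x X1 X2"
  using assms unfolding good_def by simp_all

lemma goodI: assumes "wf_graph G" "verts G \<noteq> {}" "\<And>x. x \<in> verts G \<Longrightarrow> \<exists>X1 X2. nsplit G x X1 X2"
  shows "good G"
  using assms unfolding good_def by simp

lemma good_ext:
  assumes gH: "good H" and cC: "clique H C" and cC': "clique H C'" and disj: "C \<inter> C' = {}"
    and dps: "distinct ps" and lps: "length ps \<ge> 2" and dis2: "set ps \<inter> verts H = {}"
  shows "good (verts H \<union> set ps,
           edges H \<union> path_edges ps \<union> {{hd ps, c} | c. c \<in> C} \<union> {{last ps, c} | c. c \<in> C'})"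
proof -
  define G where "G = (verts H \<union> set ps,
           edges H \<union> path_edges ps \<union> {{hd ps, c} | c. c \<in> C} \<union> {{last ps, c} | c. c \<in> C'})"
  define l where "l = length ps"
  have l2: "l \<ge> 2" using lps l_def by simp
  note gd = goodD[OF gH]
  have wfH: "wf_graph H" and neH: "verts H \<noteq> {}" using gd by blast+
  have spH: "\<exists>X1 X2. nsplit H x X1 X2" if "x \<in> verts H" for x using gd(3)[OF that] .
  have vG: "verts G = verts H \<union> set ps" by (simp add: G_def verts_def)
  have eG: "edges G = edges H \<union> path_edges ps \<union> {{hd ps, c} | c. c \<in> C} \<union> {{last ps, c} | c. c \<in> C'}"
    by (simp add: G_def edges_def)
  have CH: "C \<subseteq> verts H" using completeD(1)[OF cliqueD(1)[OF cC]] .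
  have C'H: "C' \<subseteq> verts H" using completeD(1)[OF cliqueD(1)[OF cC']] .
  have cne: "D \<noteq> {}" if "clique H D" for D
  proof
    assume "D = {}"
    obtain x where x: "x \<in> verts H" using neH by blast
    have "complete_set H {x}" by (rule completeI) (use x in auto)
    then have "{x} = D" using cliqueD(2)[OF that] \<open>D = {}\<close> by blast
    then show False using \<open>D = {}\<close> by blast
  qed
  have Cne: "C \<noteq> {}" and C'ne: "C' \<noteq> {}" using cne cC cC' by blast+
  have hd0: "hd ps = ps ! 0" using l2 l_def by (cases ps) auto
  have lastl: "last ps = ps ! (l - 1)" using l2 l_def by (subst last_conv_nth) auto
  have nthinj: "ps ! i = ps ! j \<longleftrightarrow> i = j" if "i < l" "j < l" for i j
    using dps that l_def nth_eq_iff_index_eq by blast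
  have psH: "ps ! i \<notin> verts H" if "i < l" for i
    using dis2 that l_def nth_mem by blast
  have setps: "y \<in> set ps \<longleftrightarrow> (\<exists>j<l. y = ps ! j)" for y
    using l_def by (auto simp: in_set_conv_nth)
  have hdl: "hd ps \<noteq> last ps" using hd0 lastl nthinj l2 by auto
  have hdH: "hd ps \<notin> verts H" and lastH: "last ps \<notin> verts H"
    using hd0 lastl psH l2 by auto
  have pne: "ps \<noteq> []" using l2 l_def by auto
  have hdG: "hd ps \<in> verts G" using vG pne by simp
  have lastG: "last ps \<in> verts G" using vG pne by simp
  have peset: "u \<in> set ps \<and> v \<in> set ps" if pe: "{u, v} \<in> path_edges ps" for u v
  proof -
    obtain i where i: "Suc i < length ps" "{u, v} = {ps ! i, ps ! Suc i}"
      using pe unfolding path_edges_def by blast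
    then show ?thesis by (auto simp: doubleton_eq_iff)
  qed
  have peidx: "{ps ! i, ps ! j} \<in> path_edges ps \<longleftrightarrow> (j = Suc i \<or> i = Suc j)"
    if ij: "i < l" "j < l" for i j
  proof
    assume "{ps ! i, ps ! j} \<in> path_edges ps"
    then obtain m where m: "Suc m < l" "{ps ! i, ps ! j} = {ps ! m, ps ! Suc m}"
      unfolding path_edges_def l_def by blast
    then have "(ps ! i = ps ! m \<and> ps ! j = ps ! Suc m) \<or> (ps ! i = ps ! Suc m \<and> ps ! j = ps ! m)"
      by (auto simp: doubleton_eq_iff)
    then show "j = Suc i \<or> i = Suc j" using nthinj[OF ij(1)] nthinj[OF ij(2)] m(1) by auto
  next
    assume "j = Suc i \<or> i = Suc j"
    then show "{ps ! i, ps ! j} \<in> path_edges ps"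
    proof
      assume "j = Suc i" then show ?thesis using ij unfolding path_edges_def l_def by blast
    next
      assume "i = Suc j" then have "{ps ! i, ps ! j} = {ps ! j, ps ! Suc j}" by auto
      then show ?thesis using ij \<open>i = Suc j\<close> unfolding path_edges_def l_def by blast
    qed
  qed
  have adjG: "adj G u v \<longleftrightarrow> adj H u v \<or> {u, v} \<in> path_edges ps \<or> (u = hd ps \<and> v \<in> C) \<or>
      (v = hd ps \<and> u \<in> C) \<or> (u = last ps \<and> v \<in> C') \<or> (v = last ps \<and> u \<in> C')" for u v
    unfolding adj_def eG using pair_in_star[of u v "hd ps" C] pair_in_star[of u v "last ps" C'] by blast
  have adjHG: "adj H u v \<Longrightarrow> adj G u v" for u v using adjG by blast
  have subV: "verts H \<subseteq> verts G" using vG by blast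
  have subE: "edges H \<subseteq> edges G" using eG by blast
  have adjHx: "adj G x y \<longleftrightarrow> adj H x y \<or> (y = hd ps \<and> x \<in> C) \<or> (y = last ps \<and> x \<in> C')"
    if x: "x \<in> verts H" for x y
  proof -
    have "x \<notin> set ps" using x dis2 by blast
    then have "{x, y} \<notin> path_edges ps" "x \<noteq> hd ps" "x \<noteq> last ps" using peset hdH lastH x by blast+
    then show ?thesis using adjG[of x y] by blast
  qed
  have adjHH: "adj G u v \<longleftrightarrow> adj H u v" if "u \<in> verts H" "v \<in> verts H" for u v
    using adjHx[OF that(1), of v] hdH lastH that(2) by blast
  have adjP: "adj G (ps ! i) y \<longleftrightarrow> (\<exists>j<l. y = ps ! j \<and> (j = Suc i \<or> i = Suc j)) \<or>
       (i = 0 \<and> y \<in> C) \<or> (Suc i = l \<and> y \<in> C')" if i: "i < l" for i y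
  proof -
    have n1: "\<not> adj H (ps ! i) y" using wf_adj[OF wfH, of "ps ! i" y] psH[OF i] by blast
    have n2: "\<not> (y = hd ps \<and> ps ! i \<in> C)" "\<not> (y = last ps \<and> ps ! i \<in> C')"
      using psH[OF i] CH C'H by blast+
    have e1: "ps ! i = hd ps \<longleftrightarrow> i = 0" using hd0 nthinj i l2 by auto
    have e2: "ps ! i = last ps \<longleftrightarrow> Suc i = l" using lastl nthinj i l2 by auto
    have e3: "{ps ! i, y} \<in> path_edges ps \<longleftrightarrow> (\<exists>j<l. y = ps ! j \<and> (j = Suc i \<or> i = Suc j))"
    proof
      assume a: "{ps ! i, y} \<in> path_edges ps"
      then obtain j where j: "j < l" "y = ps ! j" using peset setps by blast
      then show "\<exists>j<l. y = ps ! j \<and> (j = Suc i \<or> i = Suc j)" using peidx[OF i j(1)] a by blast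
    next
      assume "\<exists>j<l. y = ps ! j \<and> (j = Suc i \<or> i = Suc j)"
      then show "{ps ! i, y} \<in> path_edges ps" using peidx[OF i] by blast
    qed
    show ?thesis using adjG[of "ps ! i" y] n1 n2 e1 e2 e3 by blast
  qed
  have wfG: "wf_graph G"
    unfolding wf_graph_def
  proof
    have "finite (verts H)" using wfH unfolding wf_graph_def by simp
    then show "finite (verts G)" using vG by simp
    show "edges G \<subseteq> {{u, v} |u v. u \<in> verts G \<and> v \<in> verts G \<and> u \<noteq> v}"
    proof
      fix e assume e: "e \<in> edges G"
      show "e \<in> {{u, v} |u v. u \<in> verts G \<and> v \<in> verts G \<and> u \<noteq> v}"
      proof -
        have "e \<in> edges H \<or> e \<in> path_edges ps \<or> e \<in> {{hd ps, c} | c. c \<in> C} \<or> e \<in> {{last ps, c} | c. c \<in> C'}"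
          using e eG by blast
        moreover have ?thesis if "e \<in> edges H"
          using that wfH subV unfolding wf_graph_def by fast
        moreover have ?thesis if h: "e \<in> path_edges ps"
        proof -
          obtain i where i: "Suc i < l" "e = {ps ! i, ps ! Suc i}" using h unfolding path_edges_def l_def by blast
          have "ps ! i \<noteq> ps ! Suc i" using nthinj i(1) by simp
          moreover have "ps ! i \<in> verts G" "ps ! Suc i \<in> verts G" using i(1) vG l_def by auto
          ultimately show ?thesis using i(2) by blast
        qed
        moreover have ?thesis if h: "e \<in> {{hd ps, c} | c. c \<in> C}"
        proof -
          obtain c where c: "c \<in> C" "e = {hd ps, c}" using h by blast
          have "hd ps \<noteq> c" using c CH hdH by blast
          moreover have "hd ps \<in> verts G" "c \<in> verts G" using c CH vG hdG by auto
          ultimately show ?thesis using c(2) by blast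
        qed
        moreover have ?thesis if h: "e \<in> {{last ps, c} | c. c \<in> C'}"
        proof -
          obtain c where c: "c \<in> C'" "e = {last ps, c}" using h by blast
          have "last ps \<noteq> c" using c C'H lastH by blast
          moreover have "last ps \<in> verts G" "c \<in> verts G" using c C'H vG lastG by auto
          ultimately show ?thesis using c(2) by blast
        qed
        ultimately show ?thesis by blast
      qed
    qed
  qed
  have monoc: "complete_set G S" if "complete_set H S" for S
    using mono_complete[OF that subV subE] .
  have cplx: "complete_set G (insert a D)"
    if cl: "clique H D" and aG: "a \<in> verts G" and aD: "\<And>c. c \<in> D \<Longrightarrow> adj G a c" for a D
  proof (rule completeI)
    show "insert a D \<subseteq> verts G" using aG completeD(1)[OF cliqueD(1)[OF cl]] subV by blast
    fix u v assume uv: "u \<in> insert a D" "v \<in> insert a D" "u \<noteq> v"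
    show "adj G u v"
    proof (cases "u = a")
      case True then show ?thesis using aD uv by auto
    next
      case False
      note uD = this
      show ?thesis
      proof (cases "v = a")
        case True
        then have "u \<in> D" using uv uD by blast
        then have "adj G a u" using aD by blast
        then show ?thesis using True adj_sym[of G a u] by simp
      next
        case False
        then show ?thesis using uD uv completeD(2)[OF cliqueD(1)[OF cl]] adjHG by blast
      qed
    qed
  qed
  have cC1: "complete_set G (insert (hd ps) C)"
    by (rule cplx[OF cC hdG]) (use adjG in blast)
  have cC2: "complete_set G (insert (last ps) C')"
    by (rule cplx[OF cC' lastG]) (use adjG in blast)
  have attach: "nsplit G x (insert a X1) X2"
    if ns: "nsplit H x X1 X2" and DX: "D = insert x X1" and aH: "a \<notin> verts H"
      and ax: "\<And>y. adj G x y \<longleftrightarrow> adj H x y \<or> y = a" and cD: "complete_set G (insert a D)"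
      and az: "\<And>z. z \<in> verts H \<Longrightarrow> adj G a z \<Longrightarrow> z \<in> D" for x X1 X2 a D
  proof -
    note d = nsplitD[OF ns]
    have X2H: "X2 \<subseteq> verts H" using completeD(1)[OF d(5)] by blast
    have X1H: "X1 \<subseteq> verts H" using completeD(1)[OF d(4)] by blast
    have xH: "x \<in> verts H" using completeD(1)[OF d(4)] by blast
    have xn: "x \<notin> X2" using nsplit_notin[OF wfH ns] by blast
    show ?thesis
    proof (rule nsplitI)
      show "insert a X1 \<noteq> {}" by blast
      show "X2 \<noteq> {}" using d(2) .
      show "insert a X1 \<inter> X2 = {}" using d(3) X2H aH by blast
      have "insert x (insert a X1) = insert a D" using DX by blast
      then show "complete_set G (insert x (insert a X1))" using cD by simp
      show "complete_set G (insert x X2)" using monoc[OF d(5)] .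
      show "\<not> adj G y z" if yz: "y \<in> insert a X1" "z \<in> X2" for y z
      proof (cases "y = a")
        case True
        show ?thesis
        proof
          assume "adj G y z"
          then have "z \<in> D" using az[of z] True X2H yz(2) by blast
          then show False using DX xn yz(2) d(3) by blast
        qed
      next
        case False
        then have "y \<in> X1" using yz by blast
        then show ?thesis using adjHH[of y z] X1H X2H yz(2) d(6) by blast
      qed
      show "adj G x y \<longleftrightarrow> y \<in> insert a X1 \<union> X2" for y using ax[of y] d(7)[of y] by blast
    qed
  qed
  have noattach: "nsplit G x X1 X2"
    if ns: "nsplit H x X1 X2" and ax: "\<And>y. adj G x y \<longleftrightarrow> adj H x y" for x X1 X2
  proof -
    note d = nsplitD[OF ns]
    have X2H: "X2 \<subseteq> verts H" using completeD(1)[OF d(5)] by blast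
    have X1H: "X1 \<subseteq> verts H" using completeD(1)[OF d(4)] by blast
    show ?thesis
    proof (rule nsplitI)
      show "\<not> adj G y z" if yz: "y \<in> X1" "z \<in> X2" for y z
        using adjHH[of y z] X1H X2H yz d(6) by blast
      show "adj G x y \<longleftrightarrow> y \<in> X1 \<union> X2" for y using ax[of y] d(7)[of y] by blast
    qed (use d monoc in blast)+
  qed
  have splitH: "\<exists>X1 X2. nsplit G x X1 X2" if xH: "x \<in> verts H" for x
  proof -
    obtain X1 X2 where ns: "nsplit H x X1 X2" using spH[OF xH] by blast
    show ?thesis
    proof (cases "x \<in> C")
      case True
      then have xC': "x \<notin> C'" using disj by blast
      have ax: "adj G x y \<longleftrightarrow> adj H x y \<or> y = hd ps" for y using adjHx[OF xH, of y] True xC' by blast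
      have az: "z \<in> C" if "z \<in> verts H" "adj G (hd ps) z" for z
        using adjHx[OF that(1), of "hd ps"] that(2) adj_sym[of G z "hd ps"]
          wf_adj[OF wfH, of z "hd ps"] hdH hdl by blast
      have "C = insert x X1 \<or> C = insert x X2" using clique_cases[OF wfH ns cC True] .
      then show ?thesis
      proof
        assume "C = insert x X1"
        then show ?thesis using attach[OF ns _ hdH ax cC1 az] by blast
      next
        assume "C = insert x X2"
        then show ?thesis using attach[OF nsplit_sym1[OF ns] _ hdH ax cC1 az] by blast
      qed
    next
      case False
      note xC = this
      show ?thesis
      proof (cases "x \<in> C'")
        case True
        have ax: "adj G x y \<longleftrightarrow> adj H x y \<or> y = last ps" for y using adjHx[OF xH, of y] True xC by blast
        have az: "z \<in> C'" if "z \<in> verts H" "adj G (last ps) z" for z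
          using adjHx[OF that(1), of "last ps"] that(2) adj_sym[of G z "last ps"]
            wf_adj[OF wfH, of z "last ps"] lastH hdl[symmetric] by blast
        have "C' = insert x X1 \<or> C' = insert x X2" using clique_cases[OF wfH ns cC' True] .
        then show ?thesis
        proof
          assume "C' = insert x X1"
          then show ?thesis using attach[OF ns _ lastH ax cC2 az] by blast
        next
          assume "C' = insert x X2"
          then show ?thesis using attach[OF nsplit_sym1[OF ns] _ lastH ax cC2 az] by blast
        qed
      next
        case False
        then have "adj G x y \<longleftrightarrow> adj H x y" for y using adjHx[OF xH, of y] xC by blast
        then show ?thesis using noattach[OF ns] by blast
      qed
    qed
  qed
  have splitP: "\<exists>X1 X2. nsplit G (ps ! i) X1 X2" if i: "i < l" for i
  proof -
    define X1 where "X1 = (if i = 0 then C else {ps ! (i - 1)})"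
    define X2 where "X2 = (if Suc i = l then C' else {ps ! Suc i})"
    have psG: "ps ! j \<in> verts G" if "j < l" for j using that vG l_def by auto
    have X1H: "i = 0 \<Longrightarrow> X1 \<subseteq> verts H" using CH X1_def by simp
    have X2H: "Suc i = l \<Longrightarrow> X2 \<subseteq> verts H" using C'H X2_def by simp
    have "nsplit G (ps ! i) X1 X2"
    proof (rule nsplitI)
      show "X1 \<noteq> {}" using Cne X1_def by simp
      show "X2 \<noteq> {}" using C'ne X2_def by simp
      show "X1 \<inter> X2 = {}"
      proof (cases "i = 0")
        case True
        then have "Suc i < l" using l2 by simp
        then show ?thesis using True X1_def X2_def CH psH by auto
      next
        case False
        show ?thesis
        proof (cases "Suc i = l")
          case True then show ?thesis using False X1_def X2_def C'H psH i by auto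
        next
          case False
          then show ?thesis using \<open>i \<noteq> 0\<close> X1_def X2_def nthinj i by auto
        qed
      qed
      show "complete_set G (insert (ps ! i) X1)"
      proof (cases "i = 0")
        case True then show ?thesis using cC1 hd0 X1_def by simp
      next
        case False
        have "i - 1 < l \<and> i = Suc (i - 1)" using False i by auto
        then have "adj G (ps ! i) (ps ! (i - 1))" using adjP[OF i, of "ps ! (i - 1)"] by blast
        then show ?thesis using complete_pair[OF psG psG] False i X1_def by auto
      qed
      show "complete_set G (insert (ps ! i) X2)"
      proof (cases "Suc i = l")
        case True
        then have "l - 1 = i" by simp
        then show ?thesis using cC2 lastl X2_def True by simp
      next
        case False
        have "Suc i < l" using False i by auto
        then have "adj G (ps ! i) (ps ! Suc i)" using adjP[OF i, of "ps ! Suc i"] by blast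
        then show ?thesis using complete_pair[OF psG psG] False i X2_def by auto
      qed
      show "\<not> adj G y z" if yz: "y \<in> X1" "z \<in> X2" for y z
      proof (cases "i = 0")
        case True
        then have s: "Suc i < l" using l2 by simp
        then have z: "z = ps ! 1" using yz X2_def True by simp
        have yC: "y \<in> C" "y \<in> verts H" using yz X1_def True CH by auto
        have "ps ! 1 \<noteq> hd ps" using hd0 nthinj s True by auto
        moreover have "\<not> adj H y (ps ! 1)" using wf_adj[OF wfH, of y "ps ! 1"] psH s True by auto
        moreover have "y \<notin> C'" using yC(1) disj by blast
        ultimately show ?thesis unfolding adjHx[OF yC(2)] using z by simp
      next
        case False
        note i0 = this
        then have y: "y = ps ! (i - 1)" using yz X1_def by simp
        have im: "i - 1 < l" using i by simp
        show ?thesis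
        proof (cases "Suc i = l")
          case True
          then have zC: "z \<in> C'" using yz X2_def by simp
          then have zH: "z \<in> verts H" using C'H by blast
          have "\<not> (\<exists>j<l. z = ps ! j)" using zH psH by blast
          moreover have "Suc (i - 1) \<noteq> l" using True i0 by simp
          ultimately show ?thesis using adjP[OF im, of z] y zC disj by blast
        next
          case False
          then have z: "z = ps ! Suc i" using yz X2_def by simp
          have zH: "z \<notin> C" "z \<notin> C'" using z psH False i CH C'H by auto
          have "\<not> (\<exists>j<l. z = ps ! j \<and> (j = Suc (i - 1) \<or> i - 1 = Suc j))"
            using z nthinj False i i0 by auto
          then show ?thesis using adjP[OF im, of z] y zH by blast
        qed
      qed
      show "adj G (ps ! i) y \<longleftrightarrow> y \<in> X1 \<union> X2" for y
      proof -
        have "(\<exists>j<l. y = ps ! j \<and> (j = Suc i \<or> i = Suc j)) \<longleftrightarrow>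
              ((Suc i < l \<and> y = ps ! Suc i) \<or> (i > 0 \<and> y = ps ! (i - 1)))"
        proof
          assume "\<exists>j<l. y = ps ! j \<and> (j = Suc i \<or> i = Suc j)"
          then obtain j where j: "j < l" "y = ps ! j" "j = Suc i \<or> i = Suc j" by blast
          show "(Suc i < l \<and> y = ps ! Suc i) \<or> (i > 0 \<and> y = ps ! (i - 1))"
          proof (cases "j = Suc i")
            case True then show ?thesis using j by simp
          next
            case False then have "i = Suc j" using j by simp
            then show ?thesis using j by simp
          qed
        next
          assume h: "(Suc i < l \<and> y = ps ! Suc i) \<or> (i > 0 \<and> y = ps ! (i - 1))"
          show "\<exists>j<l. y = ps ! j \<and> (j = Suc i \<or> i = Suc j)"
          proof (cases "Suc i < l \<and> y = ps ! Suc i")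
            case True then show ?thesis by blast
          next
            case False
            then have "i > 0" "y = ps ! (i - 1)" using h by blast+
            then show ?thesis using i by (intro exI[of _ "i - 1"]) auto
          qed
        qed
        then show ?thesis using adjP[OF i, of y] X1_def X2_def i by auto
      qed
    qed
    then show ?thesis by blast
  qed
  have "\<exists>X1 X2. nsplit G x X1 X2" if "x \<in> verts G" for x
  proof (cases "x \<in> verts H")
    case True then show ?thesis using splitH by blast
  next
    case False
    then have "x \<in> set ps" using that vG by blast
    then obtain i where "i < l" "x = ps ! i" using setps by blast
    then show ?thesis using splitP by blast
  qed
  moreover have "verts G \<noteq> {}" using vG neH by blast
  ultimately have "good G" using goodI[OF wfG] by blast
  then show ?thesis unfolding G_def .
qed



definition starT :: "nat \<Rightarrow> nat graph" where
  "starT k = ({0..k}, {{0, i} | i. i \<in> {1..k}})"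

lemma starT_verts: "verts (starT k) = {0..k}" by (simp add: starT_def verts_def)
lemma starT_edges: "edges (starT k) = {{0, i} | i. i \<in> {1..k}}" by (simp add: starT_def edges_def)

lemma starT_adj: "adj (starT k) u v \<longleftrightarrow> (u = 0 \<and> v \<in> {1..k}) \<or> (v = 0 \<and> u \<in> {1..k})"
  unfolding adj_def starT_edges by (rule pair_in_star)

lemma starT_wf: "wf_graph (starT k)"
  unfolding wf_graph_def starT_verts starT_edges by force

lemma starT_star: "k \<ge> 1 \<Longrightarrow> is_star (starT k)"
  unfolding is_star_def
proof (intro conjI)
  assume k: "k \<ge> 1"
  show "wf_graph (starT k)" by (rule starT_wf)
  show "2 \<le> card (verts (starT k))" using k by (simp add: starT_verts)
  show "\<exists>c\<in>verts (starT k). edges (starT k) = {{c, x} |x. x \<in> verts (starT k) \<and> x \<noteq> c}"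
  proof (rule bexI[of _ 0])
    have e: "(x \<in> {1..k}) = (x \<in> {0..k} \<and> x \<noteq> 0)" for x :: nat by auto
    show "edges (starT k) = {{0, x} |x. x \<in> verts (starT k) \<and> x \<noteq> 0}"
      unfolding starT_verts starT_edges e ..
    show "0 \<in> verts (starT k)" unfolding starT_verts by simp
  qed
qed

lemma starT_tree: "is_tree (starT k)"
  unfolding is_tree_def
proof (intro conjI)
  show "wf_graph (starT k)" by (rule starT_wf)
  show "verts (starT k) \<noteq> {}" by (simp add: starT_verts)
  show "connected_graph (starT k)"
    unfolding connected_graph_def
  proof (intro ballI)
    fix u v assume uv: "u \<in> verts (starT k)" "v \<in> verts (starT k)"
    have u0: "(adj (starT k))\<^sup>*\<^sup>* u 0"
    proof (cases "u = 0")
      case False then have "adj (starT k) u 0" using uv by (auto simp: starT_adj starT_verts)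
      then show ?thesis by blast
    qed simp
    have v0: "(adj (starT k))\<^sup>*\<^sup>* 0 v"
    proof (cases "v = 0")
      case False then have "adj (starT k) 0 v" using uv by (auto simp: starT_adj starT_verts)
      then show ?thesis by blast
    qed simp
    show "(adj (starT k))\<^sup>*\<^sup>* u v" using u0 v0 by simp
  qed
  show "\<not> has_cycle (starT k)"
    unfolding has_cycle_def
  proof
    assume "\<exists>cs. distinct cs \<and> 3 \<le> length cs \<and> set cs \<subseteq> verts (starT k) \<and>
        (\<forall>i. Suc i < length cs \<longrightarrow> adj (starT k) (cs ! i) (cs ! Suc i)) \<and>
        adj (starT k) (last cs) (hd cs)"
    then obtain cs where d: "distinct cs" and l: "3 \<le> length cs"
      and a: "\<And>i. Suc i < length cs \<Longrightarrow> adj (starT k) (cs ! i) (cs ! Suc i)"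
      and lh: "adj (starT k) (last cs) (hd cs)" by blast
    have z: "adj (starT k) u v \<Longrightarrow> u = 0 \<or> v = 0" for u v by (auto simp: starT_adj)
    have ne: "cs ! i \<noteq> cs ! j" if "i < length cs" "j < length cs" "i \<noteq> j" for i j
      using d that nth_eq_iff_index_eq by blast
    have a01: "cs ! 0 = 0 \<or> cs ! 1 = 0" using z[OF a[of 0]] l by simp
    have a12: "cs ! 1 = 0 \<or> cs ! 2 = 0" using z[OF a[of 1]] l by (simp add: numeral_2_eq_2)
    have lp: "0 < length cs" "1 < length cs" "2 < length cs" "length cs - 1 < length cs" "length cs - 1 \<noteq> 1"
      using l by auto
    have cne: "cs \<noteq> []" using lp(1) by auto
    have hd: "hd cs = cs ! 0" using hd_conv_nth[OF cne] .
    have lst: "last cs = cs ! (length cs - 1)" using last_conv_nth[OF cne] .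
    show False
    proof (cases "cs ! 1 = 0")
      case False
      have "cs ! 0 \<noteq> cs ! 2" using ne lp by simp
      then show ?thesis using a01 a12 False by auto
    next
      case True
      have "cs ! 0 \<noteq> cs ! 1" using ne lp by simp
      moreover have "cs ! (length cs - 1) \<noteq> cs ! 1" using ne lp by simp
      ultimately have "cs ! 0 \<noteq> 0" "cs ! (length cs - 1) \<noteq> 0" using True by auto
      then show ?thesis using z[OF lh] hd lst by simp
    qed
  qed
qed

lemma starT_degree: "k \<ge> 1 \<Longrightarrow> max_degree (starT k) = k"
proof -
  assume k: "k \<ge> 1"
  have d0: "degree (starT k) 0 = k"
  proof -
    have "{u. adj (starT k) u 0} = {1..k}" by (auto simp: starT_adj)
    then show ?thesis unfolding degree_def by simp
  qed
  have di: "degree (starT k) i = 1" if "i \<in> {1..k}" for i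
  proof -
    have "{u. adj (starT k) u i} = {0}" using that by (auto simp: starT_adj)
    then show ?thesis unfolding degree_def by simp
  qed
  have "degree (starT k) ` {0..k} = {k} \<union> degree (starT k) ` {1..k}"
  proof -
    have "{0..k} = insert 0 {1..k}" by auto
    then show ?thesis using d0 by simp
  qed
  also have "degree (starT k) ` {1..k} = {1}" using di k by auto
  finally have "degree (starT k) ` {0..k} = {k, 1}" by (simp add: insert_commute)
  then show ?thesis unfolding max_degree_def starT_verts using k by (simp add: max_def)
qed



lemma gate_good: "gate G \<Longrightarrow> good G"
proof (induction rule: gate.induct)
  case (gate_cycle vs) then show ?case by (rule good_cycle)
next
  case (gate_ext H C C' ps) then show ?case by (intro good_ext)
qed

lemma pe3: "path_edges [a, b, c] = {{a, b}, {b, c}}"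
  unfolding path_edges_def
proof (rule set_eqI, rule iffI)
  fix e assume "e \<in> {{[a, b, c] ! i, [a, b, c] ! Suc i} |i. Suc i < length [a, b, c]}"
  then obtain i where i: "Suc i < length [a, b, c]" "e = {[a, b, c] ! i, [a, b, c] ! Suc i}" by blast
  then have "i = 0 \<or> i = 1" by auto
  then show "e \<in> {{a, b}, {b, c}}" using i by auto
next
  fix e assume "e \<in> {{a, b}, {b, c}}"
  then have "e = {[a, b, c] ! 0, [a, b, c] ! Suc 0} \<or> e = {[a, b, c] ! 1, [a, b, c] ! Suc 1}" by auto
  moreover have "Suc 0 < length [a, b, c]" "Suc 1 < length [a, b, c]" by auto
  ultimately show "e \<in> {{[a, b, c] ! i, [a, b, c] ! Suc i} |i. Suc i < length [a, b, c]}"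
    by blast
qed

theorem lemma4:
  fixes G :: "'a graph" and k :: nat
  assumes "gate G" and "num_cliques G = k"
  shows "helly_h22 k G \<and> (\<exists>(T::nat graph) P. is_star T \<and> helly_h22_rep k G T P)"
proof -
  have g: "good G" using gate_good[OF assms(1)] .
  note gd = goodD[OF g]
  have wf: "wf_graph G" using gd(1) .
  define cl where "cl = {C. clique G C}"
  have clsub: "cl \<subseteq> Pow (verts G)"
    unfolding cl_def using cliqueD(1) completeD(1) by blast
  have finV: "finite (verts G)" using wf unfolding wf_graph_def by simp
  have fin: "finite cl" using finite_subset[OF clsub] finV by simp
  have kc: "card cl = k" using assms(2) unfolding num_cliques_def cl_def by simp
  obtain f where f: "bij_betw f cl {0..<k}" using ex_bij_betw_finite_nat[OF fin] kc by blast
  have finj: "inj_on f cl" using f bij_betw_def by blast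
  have frange: "C \<in> cl \<Longrightarrow> f C < k" for C using f bij_betwE by fastforce
  have "\<forall>x\<in>verts G. \<exists>p. nsplit G x (fst p) (snd p)" using gd(3) by simp
  then obtain sg where sg: "\<And>x. x \<in> verts G \<Longrightarrow> nsplit G x (fst (sg x)) (snd (sg x))"
    by metis
  define A where "A x = insert x (fst (sg x))" for x
  define B where "B x = insert x (snd (sg x))" for x
  have Acl: "A x \<in> cl" if "x \<in> verts G" for x
    unfolding cl_def A_def using clique_side[OF wf sg[OF that]] by simp
  have Bcl: "B x \<in> cl" if "x \<in> verts G" for x
    unfolding cl_def B_def using clique_side[OF wf nsplit_sym1[OF sg[OF that]]] by simp
  have xAB: "x \<in> A x" "x \<in> B x" for x unfolding A_def B_def by simp_all
  have AB: "A x \<noteq> B x" if x: "x \<in> verts G" for x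
  proof -
    note d = nsplitD[OF sg[OF x]]
    obtain y where y: "y \<in> fst (sg x)" using d(1) by blast
    have "y \<noteq> x" using y nsplit_notin[OF wf sg[OF x]] by blast
    then have "y \<notin> B x" using y d(3) unfolding B_def by blast
    moreover have "y \<in> A x" using y unfolding A_def by blast
    ultimately show ?thesis by blast
  qed
  have cx: "C = A x \<or> C = B x" if "x \<in> verts G" "C \<in> cl" "x \<in> C" for x C
    using clique_cases[OF wf sg[OF that(1)]] that(2,3) unfolding cl_def A_def B_def by blast
  define e where "e C = {0::nat, Suc (f C)}" for C
  have einj: "C1 = C2" if "C1 \<in> cl" "C2 \<in> cl" "e C1 = e C2" for C1 C2
  proof -
    have "f C1 = f C2" using that(3) unfolding e_def by (auto simp: doubleton_eq_iff)
    then show ?thesis using finj that(1,2) inj_on_def by metis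
  qed
  define P where "P x = [Suc (f (A x)), 0, Suc (f (B x))]" for x
  have peP: "path_edges (P x) = {e (A x), e (B x)}" for x
    unfolding P_def pe3 e_def by (simp add: insert_commute)
  have share: "path_edges (P v) \<inter> path_edges (P w) \<noteq> {} \<longleftrightarrow> (\<exists>C\<in>cl. v \<in> C \<and> w \<in> C)"
    if vw: "v \<in> verts G" "w \<in> verts G" for v w
  proof
    assume "path_edges (P v) \<inter> path_edges (P w) \<noteq> {}"
    then obtain C1 C2 where c: "C1 \<in> {A v, B v}" "C2 \<in> {A w, B w}" "e C1 = e C2"
      unfolding peP by blast
    have "C1 \<in> cl" "C2 \<in> cl" using c Acl Bcl vw by auto
    then have "C1 = C2" using einj c(3) by blast
    moreover have "v \<in> C1" "w \<in> C2" using c xAB by auto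
    ultimately show "\<exists>C\<in>cl. v \<in> C \<and> w \<in> C" using \<open>C1 \<in> cl\<close> by blast
  next
    assume "\<exists>C\<in>cl. v \<in> C \<and> w \<in> C"
    then obtain C where C: "C \<in> cl" "v \<in> C" "w \<in> C" by blast
    have "e C \<in> path_edges (P v)" using cx[OF vw(1) C(1,2)] peP by auto
    moreover have "e C \<in> path_edges (P w)" using cx[OF vw(2) C(1,3)] peP by auto
    ultimately show "path_edges (P v) \<inter> path_edges (P w) \<noteq> {}" by blast
  qed
  have adjiff: "adj G v w \<longleftrightarrow> (\<exists>C\<in>cl. v \<in> C \<and> w \<in> C)"
    if vw: "v \<in> verts G" "w \<in> verts G" "v \<noteq> w" for v w
  proof
    assume "adj G v w"
    then have "w \<in> fst (sg v) \<union> snd (sg v)" using nsplitD(7)[OF sg[OF vw(1)]] by blast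
    then have "w \<in> A v \<or> w \<in> B v" unfolding A_def B_def by blast
    then show "\<exists>C\<in>cl. v \<in> C \<and> w \<in> C" using Acl[OF vw(1)] Bcl[OF vw(1)] xAB[of v] by blast
  next
    assume "\<exists>C\<in>cl. v \<in> C \<and> w \<in> C"
    then obtain C where C: "C \<in> cl" "v \<in> C" "w \<in> C" by blast
    have cG: "clique G C" using C(1) cl_def by simp
    show "adj G v w" using completeD(2)[OF cliqueD(1)[OF cG] C(2) C(3) vw(3)] .
  qed
  obtain x0 where x0: "x0 \<in> verts G" using gd(2) by blast
  have "card {A x0, B x0} \<le> card cl" using card_mono[OF fin] Acl[OF x0] Bcl[OF x0] by simp
  then have k2: "k \<ge> 2" using AB[OF x0] kc by simp
  then have k1: "k \<ge> 1" by simp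
  have sub: "is_subpath (starT k) (P x)" if x: "x \<in> verts G" for x
    unfolding is_subpath_def
  proof (intro conjI allI impI)
    have "f (A x) \<noteq> f (B x)" using AB[OF x] finj Acl[OF x] Bcl[OF x] inj_on_def by metis
    then show "distinct (P x)" unfolding P_def by simp
    show "2 \<le> length (P x)" unfolding P_def by simp
    show "set (P x) \<subseteq> verts (starT k)"
      unfolding P_def starT_verts using frange[OF Acl[OF x]] frange[OF Bcl[OF x]] by auto
    fix i assume i: "Suc i < length (P x)"
    then have "i = 0 \<or> i = 1" unfolding P_def by auto
    then show "adj (starT k) (P x ! i) (P x ! Suc i)"
      unfolding P_def starT_adj using frange[OF Acl[OF x]] frange[OF Bcl[OF x]] by auto
  qed
  have ept: "ept_rep G (starT k) P"
    unfolding ept_rep_def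
  proof (intro conjI ballI impI)
    show "is_tree (starT k)" by (rule starT_tree)
    fix v assume v: "v \<in> verts G"
    show "is_subpath (starT k) (P v)" using sub[OF v] .
    fix w assume w: "w \<in> verts G" and vw: "v \<noteq> w"
    show "adj G v w = (path_edges (P v) \<inter> path_edges (P w) \<noteq> {})"
      using adjiff[OF v w vw] share[OF v w] by simp
  qed
  have helly: "(\<Inter>v\<in>S. path_edges (P v)) \<noteq> {}"
    if S: "S \<subseteq> verts G" "S \<noteq> {}" "\<forall>v\<in>S. \<forall>w\<in>S. path_edges (P v) \<inter> path_edges (P w) \<noteq> {}" for S
  proof -
    obtain v where v: "v \<in> S" using S(2) by blast
    have vG: "v \<in> verts G" using v S(1) by blast
    have inAB: "w \<in> A v \<or> w \<in> B v" if "w \<in> S" for w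
    proof -
      have wG: "w \<in> verts G" using that S(1) by blast
      have "path_edges (P v) \<inter> path_edges (P w) \<noteq> {}" using S(3) that v by blast
      then obtain C where C: "C \<in> cl" "v \<in> C" "w \<in> C" using share[OF vG wG] by blast
      then show ?thesis using cx[OF vG C(1) C(2)] by blast
    qed
    have "\<exists>C\<in>cl. S \<subseteq> C"
    proof (rule ccontr)
      assume no: "\<not> (\<exists>C\<in>cl. S \<subseteq> C)"
      then obtain u where u: "u \<in> S" "u \<notin> A v" using Acl[OF vG] by blast
      obtain w where w: "w \<in> S" "w \<notin> B v" using no Bcl[OF vG] by blast
      have uB: "u \<in> snd (sg v)" using inAB[OF u(1)] u(2) xAB unfolding B_def by auto
      have wA: "w \<in> fst (sg v)" using inAB[OF w(1)] w(2) xAB unfolding A_def by auto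
      have uG: "u \<in> verts G" and wG: "w \<in> verts G" using u w S(1) by blast+
      have "u \<noteq> w" using u(2) wA unfolding A_def by blast
      moreover have "path_edges (P u) \<inter> path_edges (P w) \<noteq> {}" using S(3) u(1) w(1) by blast
      then have "\<exists>C\<in>cl. u \<in> C \<and> w \<in> C" using share[OF uG wG] by blast
      ultimately have "adj G w u" using adjiff[OF wG uG] by blast
      then show False using nsplitD(6)[OF sg[OF vG] wA uB] by blast
    qed
    then obtain C where C: "C \<in> cl" "S \<subseteq> C" by blast
    have "e C \<in> path_edges (P w)" if "w \<in> S" for w
    proof -
      have "w \<in> verts G" "w \<in> C" using that S(1) C(2) by blast+
      then show ?thesis using cx[OF _ C(1)] peP by auto
    qed
    then show ?thesis by blast
  qed
  have rep: "helly_h22_rep k G (starT k) P"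
    unfolding helly_h22_rep_def helly_ept_rep_def
    using ept helly starT_degree[OF k1] by blast
  then have "is_star (starT k) \<and> helly_h22_rep k G (starT k) P" using starT_star[OF k1] by blast
  then have "\<exists>(T::nat graph) P. is_star T \<and> helly_h22_rep k G T P" by blast
  moreover then have "helly_h22 k G" unfolding helly_h22_def by blast
  ultimately show ?thesis by blast
qed

end
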